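(* Let $k\ge\ell\ge1$ be integers with $k+\ell\ge6$, let $G$ be a finite digraph, and let $Z\subseteq V(G)$ with $|Z|\ge 2$. Then $$\Pr[\phi\in\mathcal S\text{ and }\mathrm{Im}\,\phi\subseteq Z]\le \frac{(k-1)^{k-1}\ell^\ell}{(m-1)^{m-1}}\,\mu(Z)^2\,\frac{\delta(Z)}{2}\,\max_{z\in Z}\rho_Z(z)^{m-1}.$$
   Context: Put $m=k+\ell$. Digraphs are finite, without loops; $xy$ denotes an arc from $x$ to $y$; two vertices are adjacent if at least one of $xy,yx$ is an arc. The oriented star $S_{k,\ell}$ has a center $c$, a set $O$ of $k$ out-leaves and a set $I$ of $\ell$ in-leaves; its arcs are exactly $co$ ($o\in O$) and $ic$ ($i\in I$). For a digraph $G$ on $n$ vertices, let $\phi$ be a uniformly random map from $V(S_{k,\ell})$ to $V(G)$ (all $n^{m+1}$ maps equally likely), and let $\mathcal S$ be the set of maps $\phi$ that are isomorphisms from $S_{k,\ell}$ onto the induced subdigraph $G[\mathrm{Im}\,\phi]$ (in particular injective). For $A\subseteq V(G)$: $\mu(A)=|A|/n$, and $\rho_A(x)$ is the number of vertices of $A$ adjacent to $x$, divided by $n$. $\delta(Z)$ is the number of adjacent unordered pairs of vertices of $Z$ divided by $\binom{|Z|}{2}$. *)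

theory Defs
  imports Complex_Main "HOL-Library.FuncSet"
begin

definition digraph :: "'a set \<Rightarrow> ('a \<Rightarrow> 'a \<Rightarrow> bool) \<Rightarrow> bool" where
  "digraph V Arc \<longleftrightarrow> finite V \<and> (\<forall>x y. Arc x y \<longrightarrow> x \<in> V \<and> y \<in> V) \<and> (\<forall>x. \<not> Arc x x)"

definition adj :: "('a \<Rightarrow> 'a \<Rightarrow> bool) \<Rightarrow> 'a \<Rightarrow> 'a \<Rightarrow> bool" where
  "adj Arc x y \<longleftrightarrow> Arc x y \<or> Arc y x"

text \<open>Vertices of the oriented star S_{k,l}: centre, out-leaves Out i (i<k), in-leaves In i (i<l).\<close>
datatype starv = Ctr | Out nat | In nat

definition star_verts :: "nat \<Rightarrow> nat \<Rightarrow> starv set" where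
  "star_verts k l = {Ctr} \<union> Out ` {..<k} \<union> In ` {..<l}"

fun star_arc :: "starv \<Rightarrow> starv \<Rightarrow> bool" where
  "star_arc Ctr (Out _) = True"
| "star_arc (In _) Ctr = True"
| "star_arc _ _ = False"

definition star_iso :: "nat \<Rightarrow> nat \<Rightarrow> ('a \<Rightarrow> 'a \<Rightarrow> bool) \<Rightarrow> (starv \<Rightarrow> 'a) \<Rightarrow> bool" where
  "star_iso k l Arc \<phi> \<longleftrightarrow> inj_on \<phi> (star_verts k l) \<and>
     (\<forall>u\<in>star_verts k l. \<forall>v\<in>star_verts k l. Arc (\<phi> u) (\<phi> v) \<longleftrightarrow> star_arc u v)"

definition star_prob :: "nat \<Rightarrow> nat \<Rightarrow> 'a set \<Rightarrow> ('a \<Rightarrow> 'a \<Rightarrow> bool) \<Rightarrow> 'a set \<Rightarrow> real" where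
  "star_prob k l V Arc Z =
     real (card {\<phi> \<in> star_verts k l \<rightarrow>\<^sub>E V. star_iso k l Arc \<phi> \<and> \<phi> ` star_verts k l \<subseteq> Z})
     / real (card V) ^ (k + l + 1)"

definition mu :: "'a set \<Rightarrow> 'a set \<Rightarrow> real" where
  "mu V A = real (card A) / real (card V)"

definition rho :: "'a set \<Rightarrow> ('a \<Rightarrow> 'a \<Rightarrow> bool) \<Rightarrow> 'a set \<Rightarrow> 'a \<Rightarrow> real" where
  "rho V Arc A x = real (card {y \<in> A. adj Arc x y}) / real (card V)"

definition density :: "('a \<Rightarrow> 'a \<Rightarrow> bool) \<Rightarrow> 'a set \<Rightarrow> real" where
  "density Arc Z = real (card {{x, y} | x y. x \<in> Z \<and> y \<in> Z \<and> x \<noteq> y \<and> adj Arc x y})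
     / real (card Z choose 2)"

end

theory Submission
  imports Defs "HOL-Analysis.Convex"
begin

lemma amgm:
  fixes x y :: real and p q :: nat
  assumes "p>0" "q>0" "x\<ge>0" "y\<ge>0"
  shows "x^p * y^q \<le> real p^p * real q^q / real (p+q)^(p+q) * (x+y)^(p+q)"
proof (cases "x = 0 \<or> y = 0")
  case True
  have "0 \<le> real p^p * real q^q / real (p+q)^(p+q) * (x+y)^(p+q)" using assms by simp
  moreover have "x^p * y^q = 0" using True assms by auto
  ultimately show ?thesis by (metis (no_types, lifting))
next
  case False
  then have x: "x>0" and y: "y>0" using assms by auto
  define N where "N = real (p+q)"
  have N: "N > 0" using assms by (simp add: N_def)
  have "(x/p) powr (p/N) * (y/q) powr (q/N) \<le> (p/N)*(x/p) + (q/N)*(y/q)"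
    by (rule Youngs_inequality_0) (use assms x y N in \<open>auto simp: N_def add_divide_distrib[symmetric]\<close>)
  also have "\<dots> = (x+y)/N" using assms by (simp add: add_divide_distrib)
  finally have h: "(x/p) powr (p/N) * (y/q) powr (q/N) \<le> (x+y)/N" .
  have "((x/p) powr (p/N) * (y/q) powr (q/N))^(p+q) \<le> ((x+y)/N)^(p+q)"
    by (rule power_mono[OF h]) simp
  moreover have "((x/p) powr (p/N) * (y/q) powr (q/N))^(p+q) = (x/p)^p * (y/q)^q"
  proof -
    have "((x/p) powr (p/N) * (y/q) powr (q/N))^(p+q) = ((x/p) powr (p/N))^(p+q) * ((y/q) powr (q/N))^(p+q)"
      by (simp add: power_mult_distrib)
    also have "\<dots> = (x/p) powr (real (p+q) * (p/N)) * (y/q) powr (real (p+q) * (q/N))"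
      using x y assms by (simp add: powr_power)
    also have "\<dots> = (x/p) powr (real p) * (y/q) powr (real q)"
      using N by (simp add: N_def)
    also have "\<dots> = (x/p)^p * (y/q)^q" using x y assms by (simp add: powr_realpow)
    finally show ?thesis .
  qed
  ultimately have "(x/p)^p * (y/q)^q \<le> ((x+y)/N)^(p+q)" by simp
  then have "x^p * y^q / (real p^p * real q^q) \<le> (x+y)^(p+q) / N^(p+q)"
    by (simp add: power_divide)
  then show ?thesis using assms N unfolding N_def
    by (simp add: field_simps)
qed

theorem lemma4:
  fixes k l :: nat and V Z :: "'a set" and Arc :: "'a \<Rightarrow> 'a \<Rightarrow> bool"
  assumes "k \<ge> l" and "l \<ge> 1" and "k + l \<ge> 6"
    and "digraph V Arc"
    and "Z \<subseteq> V" and "card Z \<ge> 2"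
  shows "star_prob k l V Arc Z \<le>
    (real (k - 1) ^ (k - 1) * real l ^ l / real (k + l - 1) ^ (k + l - 1))
    * mu V Z ^ 2 * (density Arc Z / 2) * (Max (rho V Arc Z ` Z)) ^ (k + l - 1)"
proof -
  define SV where "SV = star_verts k l"
  define S where "S = {\<phi> \<in> SV \<rightarrow>\<^sub>E V. star_iso k l Arc \<phi> \<and> \<phi> ` SV \<subseteq> Z}"
  define C where "C = real (k - 1) ^ (k - 1) * real l ^ l / real (k + l - 1) ^ (k + l - 1)"
  define Mx where "Mx = Max (rho V Arc Z ` Z)"
  define A where "A z = {y\<in>Z. Arc z y \<and> \<not> Arc y z}" for z
  define B where "B z = {y\<in>Z. Arc y z \<and> \<not> Arc z y}" for z
  define Nb where "Nb z = {y\<in>Z. adj Arc z y}" for z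
  define T where "T z = PiE SV (\<lambda>v. case v of Ctr \<Rightarrow> {z} | Out _ \<Rightarrow> A z | In _ \<Rightarrow> B z)" for z
  define Pairs where "Pairs = {{x, y} | x y. x \<in> Z \<and> y \<in> Z \<and> x \<noteq> y \<and> adj Arc x y}"
  define n where "n = real (card V)"
  define c where "c = real (card Z)"
  have finV: "finite V" using assms(4) by (simp add: digraph_def)
  have finZ: "finite Z" using finV assms(5) finite_subset by blast
  have Zne: "Z \<noteq> {}" using assms(6) by auto
  have cZV: "card Z \<le> card V" using finV assms(5) card_mono by blast
  have npos: "n > 0" using cZV assms(6) by (simp add: n_def)
  have finSV: "finite SV" by (simp add: SV_def star_verts_def)
  have k1: "k \<ge> 1" using assms by linarith
  have sub: "S \<subseteq> (\<Union>z\<in>Z. T z)"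
  proof
    fix \<phi> assume "\<phi> \<in> S"
    then have ext: "\<phi> \<in> SV \<rightarrow>\<^sub>E V" and iso: "star_iso k l Arc \<phi>" and im: "\<phi> ` SV \<subseteq> Z"
      by (auto simp: S_def)
    have ctr: "Ctr \<in> SV" by (simp add: SV_def star_verts_def)
    have "\<phi> \<in> T (\<phi> Ctr)"
      unfolding T_def PiE_iff
    proof (intro conjI ballI)
      fix v assume v: "v \<in> SV"
      show "\<phi> v \<in> (case v of Ctr \<Rightarrow> {\<phi> Ctr} | Out _ \<Rightarrow> A (\<phi> Ctr) | In _ \<Rightarrow> B (\<phi> Ctr))"
      proof (cases v)
        case Ctr then show ?thesis by simp
      next
        case (Out i)
        have "Arc (\<phi> Ctr) (\<phi> v) \<longleftrightarrow> star_arc Ctr v" "Arc (\<phi> v) (\<phi> Ctr) \<longleftrightarrow> star_arc v Ctr"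
          using iso v ctr by (auto simp: star_iso_def SV_def)
        then show ?thesis using Out im v by (auto simp: A_def)
      next
        case (In i)
        have "Arc (\<phi> Ctr) (\<phi> v) \<longleftrightarrow> star_arc Ctr v" "Arc (\<phi> v) (\<phi> Ctr) \<longleftrightarrow> star_arc v Ctr"
          using iso v ctr by (auto simp: star_iso_def SV_def)
        then show ?thesis using In im v by (auto simp: B_def)
      qed
    next
      show "\<phi> \<in> extensional SV" using ext by (simp add: PiE_iff)
    qed
    moreover have "\<phi> Ctr \<in> Z" using im ctr by auto
    ultimately show "\<phi> \<in> (\<Union>z\<in>Z. T z)" by blast
  qed
  have finA: "finite (A z)" "finite (B z)" for z using finZ by (auto simp: A_def B_def)
  have finT: "finite (T z)" for z
    unfolding T_def using finSV finA by (intro finite_PiE) (auto split: starv.splits)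
  have cardT: "card (T z) = card (A z) ^ k * card (B z) ^ l" for z
  proof -
    have SVeq: "SV = insert Ctr (Out ` {..<k} \<union> In ` {..<l})" by (auto simp: SV_def star_verts_def)
    have "card (T z) = (\<Prod>v\<in>SV. card (case v of Ctr \<Rightarrow> {z} | Out _ \<Rightarrow> A z | In _ \<Rightarrow> B z))"
      unfolding T_def using finSV by (rule card_PiE)
    also have "\<dots> = (\<Prod>v\<in>Out ` {..<k}. card (case v of Ctr \<Rightarrow> {z} | Out _ \<Rightarrow> A z | In _ \<Rightarrow> B z))
         * (\<Prod>v\<in>In ` {..<l}. card (case v of Ctr \<Rightarrow> {z} | Out _ \<Rightarrow> A z | In _ \<Rightarrow> B z))"
      unfolding SVeq by (subst prod.insert) (auto intro: prod.union_disjoint)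
    also have "\<dots> = card (A z) ^ k * card (B z) ^ l"
      by (simp add: prod.reindex inj_on_def)
    finally show ?thesis .
  qed
  have cardS: "card S \<le> (\<Sum>z\<in>Z. card (A z) ^ k * card (B z) ^ l)"
  proof -
    have "card S \<le> card (\<Union>z\<in>Z. T z)"
      using sub finZ finT by (intro card_mono) auto
    also have "\<dots> \<le> (\<Sum>z\<in>Z. card (T z))" using finZ by (rule card_UN_le)
    finally show ?thesis by (simp add: cardT)
  qed
  have rho0: "rho V Arc Z z \<ge> 0" for z by (simp add: rho_def)
  have Mx0: "Mx \<ge> 0"
  proof -
    obtain z where "z \<in> Z" using Zne by auto
    then have "rho V Arc Z z \<le> Mx" unfolding Mx_def using finZ by (intro Max_ge) auto
    then show ?thesis using rho0[of z] by linarith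
  qed
  have deg: "real (card (A z) + card (B z)) \<le> n * Mx" if z: "z \<in> Z" for z
  proof -
    have "A z \<union> B z \<subseteq> Nb z" by (auto simp: A_def B_def Nb_def adj_def)
    moreover have "A z \<inter> B z = {}" by (auto simp: A_def B_def)
    moreover have "finite (Nb z)" using finZ by (simp add: Nb_def)
    ultimately have "card (A z) + card (B z) \<le> card (Nb z)"
      using finA by (metis card_Un_disjoint card_mono)
    moreover have "rho V Arc Z z \<le> Mx" unfolding Mx_def using finZ z by (intro Max_ge) auto
    then have "real (card (Nb z)) \<le> n * Mx" using npos
      by (simp add: rho_def Nb_def n_def field_simps)
    ultimately show ?thesis by linarith
  qed
  have C0: "C \<ge> 0" by (simp add: C_def)
  have termb: "real (card (A z) ^ k * card (B z) ^ l) \<le> real (card (A z)) * (C * (n * Mx) ^ (k + l - 1))"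
    if z: "z \<in> Z" for z
  proof -
    define a where "a = real (card (A z))"
    define b where "b = real (card (B z))"
    have a0: "a \<ge> 0" and b0: "b \<ge> 0" by (simp_all add: a_def b_def)
    have e: "k - 1 + l = k + l - 1" using k1 by simp
    have "a^(k-1) * b^l \<le> real (k-1)^(k-1) * real l^l / real (k-1+l)^(k-1+l) * (a+b)^(k-1+l)"
      using assms k1 a0 b0 by (intro amgm) auto
    also have "\<dots> = C * (a+b)^(k+l-1)" by (simp only: C_def e)
    also have "\<dots> \<le> C * (n*Mx)^(k+l-1)"
      using deg[OF z] C0 a0 b0 by (intro mult_left_mono power_mono) (auto simp: a_def b_def)
    finally have h: "a^(k-1) * b^l \<le> C * (n*Mx)^(k+l-1)" .
    have "real (card (A z) ^ k * card (B z) ^ l) = a * (a^(k-1) * b^l)"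
      using k1 by (simp add: a_def b_def power_eq_if[of _ k])
    also have "\<dots> \<le> a * (C * (n*Mx)^(k+l-1))" using h a0 by (rule mult_left_mono)
    finally show ?thesis by (simp add: a_def)
  qed
  have sumA: "(\<Sum>z\<in>Z. card (A z)) \<le> card Pairs"
  proof -
    have "(\<Sum>z\<in>Z. card (A z)) = card (Sigma Z A)" using finZ finA by (simp add: card_SigmaI)
    also have "\<dots> \<le> card Pairs"
    proof (rule card_inj_on_le)
      show "inj_on (\<lambda>(z, y). {z, y}) (Sigma Z A)"
        by (auto simp: inj_on_def A_def doubleton_eq_iff)
      show "(\<lambda>(z, y). {z, y}) ` Sigma Z A \<subseteq> Pairs"
        using assms(4) unfolding Pairs_def A_def adj_def digraph_def by fastforce
      show "finite Pairs"
        by (rule finite_subset[of _ "Pow Z"]) (auto simp: Pairs_def finZ)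
    qed
    finally show ?thesis .
  qed
  have cardS2: "real (card S) \<le> C * (n * Mx) ^ (k + l - 1) * real (card Pairs)"
  proof -
    have "real (card S) \<le> (\<Sum>z\<in>Z. real (card (A z) ^ k * card (B z) ^ l))"
      using cardS by (metis of_nat_le_iff of_nat_sum)
    also have "\<dots> \<le> (\<Sum>z\<in>Z. real (card (A z)) * (C * (n * Mx) ^ (k + l - 1)))"
      by (intro sum_mono termb)
    also have "\<dots> = C * (n * Mx) ^ (k + l - 1) * real (\<Sum>z\<in>Z. card (A z))"
      unfolding of_nat_sum sum_distrib_left by (simp add: mult_ac)
    also have "\<dots> \<le> C * (n * Mx) ^ (k + l - 1) * real (card Pairs)"
      using sumA C0 Mx0 npos by (intro mult_left_mono) (auto simp flip: of_nat_sum)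
    finally show ?thesis .
  qed
  have ch: "2 * (card Z choose 2) \<le> card Z ^ 2"
  proof -
    have "2 * (card Z * (card Z - 1) div 2) \<le> card Z * (card Z - 1)" by simp
    also have "\<dots> \<le> card Z * card Z" by simp
    finally show ?thesis by (simp add: choose_two power2_eq_square)
  qed
  have chpos: "(card Z choose 2) > 0" using assms(6) by simp
  define P where "P = real (card Pairs)"
  define h where "h = real (card Z choose 2)"
  have hpos: "h > 0" using chpos by (simp add: h_def)
  have hle: "2 * h \<le> c^2" using ch unfolding h_def c_def by (metis of_nat_le_iff of_nat_mult of_nat_numeral of_nat_power)
  have P0: "P \<ge> 0" by (simp add: P_def)
  have lhs: "star_prob k l V Arc Z \<le> C * Mx ^ (k + l - 1) * P / n^2"
  proof -
    have "star_prob k l V Arc Z = real (card S) / n ^ (k + l + 1)"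
      by (simp add: star_prob_def S_def SV_def n_def)
    also have "\<dots> \<le> C * (n * Mx) ^ (k + l - 1) * P / n ^ (k + l + 1)"
      using cardS2 npos by (simp add: P_def divide_right_mono)
    also have "\<dots> = C * Mx ^ (k + l - 1) * P / n^2"
    proof -
      have "n ^ (k + l + 1) = n ^ (k + l - 1) * n^2" using k1
        by (simp flip: power_add)
      then show ?thesis using npos by (simp add: power_mult_distrib)
    qed
    finally show ?thesis .
  qed
  have rhs: "C * Mx ^ (k + l - 1) * P / n^2 \<le> C * mu V Z ^ 2 * (density Arc Z / 2) * Mx ^ (k + l - 1)"
  proof -
    have "density Arc Z = P / h" by (simp add: density_def P_def h_def Pairs_def)
    have cpos: "c > 0" using assms(6) by (simp add: c_def)
    have "P / n^2 \<le> (c / n)^2 * (P / h / 2)"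
    proof -
      have "P * (2*h) \<le> P * c^2" using hle P0 by (rule mult_left_mono)
      then show ?thesis using npos hpos cpos by (simp add: field_simps power_divide)
    qed
    then have "C * Mx ^ (k + l - 1) * (P / n^2) \<le> C * Mx ^ (k + l - 1) * ((c / n)^2 * (P / h / 2))"
      using C0 Mx0 by (intro mult_left_mono) auto
    then show ?thesis using \<open>density Arc Z = P / h\<close>
      by (simp add: mu_def c_def n_def mult_ac)
  qed
  show ?thesis using lhs rhs by (simp add: C_def Mx_def)
qed

end
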